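(* Consider $N$ sellers $i=1,\dots,N$ over a time horizon $[0,H]$, a reserve-utility function $\underline{R}:[0,H]\to\mathbb{R}$, and selection functions $f_i:\mathbb{R}^N\times\mathbb{R}\to\mathbb{R}$. Each seller $i$ has true-metric functions $e_i^T,e_i^C:[0,H]\to\mathbb{R}$ (under treatment/control) and estimated-score functions $\hat e_i^T,\hat e_i^C:[0,H]\to\mathbb{R}$. Suppose $\hat e_i^C(t)=\hat e_i^T(t)$ for all $i=1,\dots,N$ and $t\in[0,H]$. In the naive seller-side experiment without feedback loops (defined in the context), let each seller be independently assigned to the treatment group $\mathcal{T}$ with probability $p\in(0,1)$ and otherwise to the control group $\mathcal{C}$. Then the estimator $\widehat{GTE}$ is unbiased for $\mathrm{GTE}$, i.e. $\mathbb{E}[\widehat{GTE}]=\mathrm{GTE}$, where the expectation is over the random assignment.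
   Context: Setting without feedback loops: the ranking score of a seller equals its estimated score. Global treatment regime: for all $i$ and $t$, $r_i^{GT}(t)=\hat e_i^T(t)$, $I_i^{GT}(t)=\mathbb{I}\{f_i(r_1^{GT}(t),\dots,r_N^{GT}(t),\underline{R}(t))\ge 0\}$, $O_i^{GT}(t)=I_i^{GT}(t)e_i^T(t)$. Global control regime: the same with $\hat e_i^C$ and $e_i^C$ in place of $\hat e_i^T$ and $e_i^T$, giving $r_i^{GC},I_i^{GC},O_i^{GC}$. The global treatment effect is $\mathrm{GTE}=\frac1N\sum_{i=1}^N\int_0^H\big(O_i^{GT}(t)-O_i^{GC}(t)\big)dt$. Naive seller-side experiment: given a partition $\{1,\dots,N\}=\mathcal{T}\cup\mathcal{C}$ (disjoint), for $i\in\mathcal{T}$ set $E=T$ and for $i\in\mathcal{C}$ set $E=C$; then $r_i^E(t)=\hat e_i^E(t)$, $I_i^E(t)=\mathbb{I}\{f_i(\{r_j^T(t):j\in\mathcal{T}\}\cup\{r_j^C(t):j\in\mathcal{C}\},\underline{R}(t))\ge0\}$ (i.e. $f_i$ evaluated at the vector whose $j$-th entry is seller $j$'s own-group score), and $O_i^E(t)=I_i^E(t)e_i^E(t)$. The estimator is $\widehat{GTE}=\frac{1}{Np}\sum_{i\in\mathcal{T}}\int_0^H O_i^T(t)dt-\frac{1}{N(1-p)}\sum_{i\in\mathcal{C}}\int_0^H O_i^C(t)dt$. *)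

theory Defs
  imports "HOL-Analysis.Analysis" "HOL-Probability.Probability"
begin

text \<open>Sellers are the elements of a finite type 'n, so N = CARD('n) and
  ranking-score vectors live in real^'n. Time functions are real => real,
  only their values on {0..H} matter. f i r u is the selection function
  f_i(r, u); e i t is e_i(t).\<close>

definition sel_ind ::
  "('n::finite \<Rightarrow> real^'n \<Rightarrow> real \<Rightarrow> real) \<Rightarrow> (real \<Rightarrow> real^'n) \<Rightarrow> (real \<Rightarrow> real) \<Rightarrow> 'n \<Rightarrow> real \<Rightarrow> real"
  where "sel_ind f r Rlow i t = (if f i (r t) (Rlow t) \<ge> 0 then 1 else 0)"

definition global_outcome ::
  "('n::finite \<Rightarrow> real^'n \<Rightarrow> real \<Rightarrow> real) \<Rightarrow> (real \<Rightarrow> real) \<Rightarrow> ('n \<Rightarrow> real \<Rightarrow> real)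
    \<Rightarrow> ('n \<Rightarrow> real \<Rightarrow> real) \<Rightarrow> 'n \<Rightarrow> real \<Rightarrow> real"
  where "global_outcome f Rlow e ehat i t =
           sel_ind f (\<lambda>s. \<chi> j. ehat j s) Rlow i t * e i t"

definition GTE ::
  "real \<Rightarrow> ('n::finite \<Rightarrow> real^'n \<Rightarrow> real \<Rightarrow> real) \<Rightarrow> (real \<Rightarrow> real)
    \<Rightarrow> ('n \<Rightarrow> real \<Rightarrow> real) \<Rightarrow> ('n \<Rightarrow> real \<Rightarrow> real)
    \<Rightarrow> ('n \<Rightarrow> real \<Rightarrow> real) \<Rightarrow> ('n \<Rightarrow> real \<Rightarrow> real) \<Rightarrow> real"
  where "GTE H f Rlow eT eC ehT ehC =
     (1 / real CARD('n)) * (\<Sum>i\<in>UNIV. integral {0..H}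
        (\<lambda>t. global_outcome f Rlow eT ehT i t - global_outcome f Rlow eC ehC i t))"

definition exp_rank ::
  "'n::finite set \<Rightarrow> ('n \<Rightarrow> real \<Rightarrow> real) \<Rightarrow> ('n \<Rightarrow> real \<Rightarrow> real) \<Rightarrow> real \<Rightarrow> real^'n"
  where "exp_rank Tg ehT ehC t = (\<chi> j. if j \<in> Tg then ehT j t else ehC j t)"

definition exp_outcome ::
  "'n::finite set \<Rightarrow> ('n \<Rightarrow> real^'n \<Rightarrow> real \<Rightarrow> real) \<Rightarrow> (real \<Rightarrow> real)
    \<Rightarrow> ('n \<Rightarrow> real \<Rightarrow> real) \<Rightarrow> ('n \<Rightarrow> real \<Rightarrow> real) \<Rightarrow> ('n \<Rightarrow> real \<Rightarrow> real)
    \<Rightarrow> 'n \<Rightarrow> real \<Rightarrow> real"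
  where "exp_outcome Tg f Rlow e ehT ehC i t =
           sel_ind f (exp_rank Tg ehT ehC) Rlow i t * e i t"

definition GTE_hat ::
  "real \<Rightarrow> real \<Rightarrow> 'n::finite set \<Rightarrow> ('n \<Rightarrow> real^'n \<Rightarrow> real \<Rightarrow> real) \<Rightarrow> (real \<Rightarrow> real)
    \<Rightarrow> ('n \<Rightarrow> real \<Rightarrow> real) \<Rightarrow> ('n \<Rightarrow> real \<Rightarrow> real)
    \<Rightarrow> ('n \<Rightarrow> real \<Rightarrow> real) \<Rightarrow> ('n \<Rightarrow> real \<Rightarrow> real) \<Rightarrow> real"
  where "GTE_hat p H Tg f Rlow eT eC ehT ehC =
     (1 / (real CARD('n) * p)) * (\<Sum>i\<in>Tg. integral {0..H} (exp_outcome Tg f Rlow eT ehT ehC i))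
   - (1 / (real CARD('n) * (1 - p))) * (\<Sum>i\<in>UNIV - Tg. integral {0..H} (exp_outcome Tg f Rlow eC ehT ehC i))"

definition assignment :: "real \<Rightarrow> ('n::finite \<Rightarrow> bool) pmf"
  where "assignment p = Pi_pmf UNIV False (\<lambda>_. bernoulli_pmf p)"

end

theory Submission
  imports Defs
begin

lemma expect_component:
  fixes g :: "bool \<Rightarrow> real" and i :: "'n::finite"
  assumes "0 \<le> p" "p \<le> 1"
  shows "measure_pmf.expectation (assignment p) (\<lambda>\<omega>. g (\<omega> i)) = g True * p + g False * (1 - p)"
proof -
  have "measure_pmf.expectation (assignment p) (\<lambda>\<omega>. g (\<omega> i))
       = measure_pmf.expectation (map_pmf (\<lambda>\<omega>. \<omega> i) (assignment p)) g"
    by (simp add: integral_map_pmf)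
  also have "map_pmf (\<lambda>\<omega>. \<omega> i) (assignment p) = bernoulli_pmf p"
    unfolding assignment_def by (simp add: Pi_pmf_component)
  finally show ?thesis using assms by simp
qed

theorem proposition1:
  fixes H p :: real
    and f :: "'n::finite \<Rightarrow> real^'n \<Rightarrow> real \<Rightarrow> real"
    and Rlow :: "real \<Rightarrow> real"
    and eT eC ehT ehC :: "'n \<Rightarrow> real \<Rightarrow> real"
  assumes p: "0 < p" "p < 1"
    and same_est: "\<forall>i. \<forall>t\<in>{0..H}. ehC i t = ehT i t"
    and int_T: "\<forall>i. (global_outcome f Rlow eT ehT i) integrable_on {0..H}"
    and int_C: "\<forall>i. (global_outcome f Rlow eC ehC i) integrable_on {0..H}"
  shows "measure_pmf.expectation (assignment p)
           (\<lambda>\<omega>. GTE_hat p H {i. \<omega> i} f Rlow eT eC ehT ehC)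
         = GTE H f Rlow eT eC ehT ehC"
proof -
  define N where "N = real CARD('n)"
  have N: "N > 0" unfolding N_def by simp
  define a where "a i = integral {0..H} (global_outcome f Rlow eT ehT i)" for i
  define b where "b i = integral {0..H} (global_outcome f Rlow eC ehC i)" for i
  have rk: "exp_rank Tg ehT ehC t = (\<chi> j. ehT j t)" "exp_rank Tg ehT ehC t = (\<chi> j. ehC j t)"
    if "t \<in> {0..H}" for Tg t
    using same_est that unfolding exp_rank_def by (auto simp: vec_eq_iff)
  have ea: "integral {0..H} (exp_outcome Tg f Rlow eT ehT ehC i) = a i" for Tg i
    unfolding a_def
    by (rule integral_cong) (simp add: exp_outcome_def global_outcome_def sel_ind_def rk(1))
  have eb: "integral {0..H} (exp_outcome Tg f Rlow eC ehT ehC i) = b i" for Tg i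
    unfolding b_def
    by (rule integral_cong) (simp add: exp_outcome_def global_outcome_def sel_ind_def rk(2))
  define g where "g i x = (if x then a i / (N * p) else - (b i / (N * (1 - p))))" for i x
  have hat: "GTE_hat p H {i. \<omega> i} f Rlow eT eC ehT ehC = (\<Sum>i\<in>UNIV. g i (\<omega> i))" for \<omega>
  proof -
    have "GTE_hat p H {i. \<omega> i} f Rlow eT eC ehT ehC
       = (1 / (N * p)) * (\<Sum>i\<in>{i. \<omega> i}. a i) - (1 / (N * (1 - p))) * (\<Sum>i\<in>UNIV - {i. \<omega> i}. b i)"
      unfolding GTE_hat_def N_def by (simp add: ea eb)
    also have "\<dots> = (\<Sum>i\<in>{i. \<omega> i}. g i (\<omega> i)) + (\<Sum>i\<in>UNIV - {i. \<omega> i}. g i (\<omega> i))"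
      by (simp add: g_def sum_divide_distrib sum_negf)
    also have "\<dots> = (\<Sum>i\<in>UNIV. g i (\<omega> i))"
      using sum.subset_diff[of "{i. \<omega> i}" UNIV "\<lambda>i. g i (\<omega> i)"] by (simp add: add.commute)
    finally show ?thesis .
  qed
  have "measure_pmf.expectation (assignment p) (\<lambda>\<omega>. GTE_hat p H {i. \<omega> i} f Rlow eT eC ehT ehC)
      = measure_pmf.expectation (assignment p) (\<lambda>\<omega>. \<Sum>i\<in>UNIV. g i (\<omega> i))"
    by (simp add: hat)
  also have "\<dots> = (\<Sum>i\<in>UNIV. measure_pmf.expectation (assignment p) (\<lambda>\<omega>. g i (\<omega> i)))"
    by (rule Bochner_Integration.integral_sum) (simp add: integrable_measure_pmf_finite)
  also have "\<dots> = (\<Sum>i\<in>UNIV. g i True * p + g i False * (1 - p))"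
    using p by (simp add: expect_component)
  also have "\<dots> = (\<Sum>i\<in>UNIV. (a i - b i) / N)"
    using p N by (intro sum.cong) (auto simp: g_def field_simps)
  also have "\<dots> = GTE H f Rlow eT eC ehT ehC"
    unfolding GTE_def N_def a_def b_def
    using int_T int_C by (simp add: integral_diff sum_divide_distrib)
  finally show ?thesis .
qed

end
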